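(* Consider the noisy Hegselmann–Krause model with homogeneously stubborn agents described in the context, with $n\ge 1$ regular agents, a nonempty set $\mathcal{B}_1$ of stubborn agents with common constant opinion $B_1\in[0,1]$, and confidence bound $\epsilon\in(0,1]$. For every initial condition $x(0)\in[0,1]^n$ and every noise bound $\delta\in\left(0,\frac{\epsilon}{2(n+1)}\right)$, almost surely $$d_{\mathcal{V}}:=\limsup_{t\to\infty}\max_{i,j\in\mathcal{V}}|x_i(t)-x_j(t)|\le 2\delta \quad\text{and}\quad d_{\mathcal{V}}^{B_1}:=\limsup_{t\to\infty}\max_{i\in\mathcal{V}}|x_i(t)-B_1|\le (n+1)\delta .$$
   Context: Regular agents: $\mathcal{V}=\{1,\dots,n\}$, with opinions $x_i(t)\in[0,1]$, $t=0,1,2,\dots$. Stubborn agents: a finite nonempty index set $\mathcal{B}_1$ disjoint from $\mathcal{V}$, with $x_k(t)\equiv B_1$ for all $k\in\mathcal{B}_1$ and all $t\ge0$, where $B_1\in[0,1]$ is fixed. For $i\in\mathcal{V}$, the neighbor set is $\mathcal{N}(i,x(t))=\{j\in\mathcal{V}\cup\mathcal{B}_1: |x_j(t)-x_i(t)|\le\epsilon\}$ (it contains $i$). The update for $i\in\mathcal{V}$ is $x_i^*(t)=|\mathcal{N}(i,x(t))|^{-1}\sum_{j\in\mathcal{N}(i,x(t))}x_j(t)+\xi_i(t+1)$, and $x_i(t+1)=1$ if $x_i^*(t)>1$, $x_i(t+1)=x_i^*(t)$ if $x_i^*(t)\in[0,1]$, $x_i(t+1)=0$ if $x_i^*(t)<0$.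 The noises $\{\xi_i(t)\}_{i\in\mathcal{V},t\ge1}$ are i.i.d. real random variables with $E\xi_1(1)=0$, $E\xi_1(1)^2>0$ and $|\xi_1(1)|\le\delta$ almost surely. *)

theory Defs
  imports "HOL-Probability.Probability"
begin

text \<open>Regular agents are indexed by V = {1..n}; stubborn agents by a finite nonempty set Bs of
naturals disjoint from {1..n}. An opinion profile is a function nat => real.\<close>

definition clip01 :: "real \<Rightarrow> real" where
  "clip01 z = (if z > 1 then 1 else if z < 0 then 0 else z)"

definition hk_nbrs :: "nat \<Rightarrow> nat set \<Rightarrow> real \<Rightarrow> (nat \<Rightarrow> real) \<Rightarrow> nat \<Rightarrow> nat set" where
  "hk_nbrs n Bs eps x i = {j \<in> {1..n} \<union> Bs. \<bar>x j - x i\<bar> \<le> eps}"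

text \<open>hk_traj n Bs b1 eps x0 xi t : opinions of all agents at time t, for one noise realisation
xi i t (agent i, time t \<ge> 1).\<close>
fun hk_traj :: "nat \<Rightarrow> nat set \<Rightarrow> real \<Rightarrow> real \<Rightarrow> (nat \<Rightarrow> real) \<Rightarrow> (nat \<Rightarrow> nat \<Rightarrow> real)
    \<Rightarrow> nat \<Rightarrow> nat \<Rightarrow> real" where
  "hk_traj n Bs b1 eps x0 xi 0 = (\<lambda>k. if k \<in> Bs then b1 else x0 k)"
| "hk_traj n Bs b1 eps x0 xi (Suc t) =
    (let x = hk_traj n Bs b1 eps x0 xi t in
     (\<lambda>k. if k \<in> Bs then b1
          else if k \<in> {1..n} then
            clip01 ((\<Sum>j\<in>hk_nbrs n Bs eps x k. x j) / real (card (hk_nbrs n Bs eps x k))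
                    + xi k (Suc t))
          else x0 k))"

end

theory Submission
  imports Defs
begin


lemma clip01_le: "clip01 z \<le> max z 0" by (simp add: clip01_def)
lemma clip01_ge: "clip01 z \<ge> min z 1" by (simp add: clip01_def)
lemma clip01_range: "0 \<le> clip01 z \<and> clip01 z \<le> 1" by (simp add: clip01_def)
lemma clip01_lip: "\<bar>clip01 a - clip01 b\<bar> \<le> \<bar>a - b\<bar>" by (simp add: clip01_def)

locale hk =
  fixes n :: nat and Bs :: "nat set" and b1 eps :: real
  assumes n1: "n \<ge> 1" and finB: "finite Bs" and neB: "Bs \<noteq> {}"
    and disj: "Bs \<inter> {1..n} = {}" and b0: "0 \<le> b1" and b1': "b1 \<le> 1" and eps0: "0 < eps"
begin

definition avg :: "(nat \<Rightarrow> real) \<Rightarrow> nat \<Rightarrow> real" where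
  "avg x k = (\<Sum>j\<in>hk_nbrs n Bs eps x k. x j) / real (card (hk_nbrs n Bs eps x k))"

lemma nbrs_sub: "hk_nbrs n Bs eps x k \<subseteq> {1..n} \<union> Bs" by (auto simp: hk_nbrs_def)
lemma nbrs_fin: "finite (hk_nbrs n Bs eps x k)"
  using nbrs_sub finB by (meson finite_Un finite_atLeastAtMost finite_subset)
lemma nbrs_self: "k \<in> {1..n} \<Longrightarrow> k \<in> hk_nbrs n Bs eps x k"
  using eps0 by (simp add: hk_nbrs_def)
lemma card_pos: "k \<in> {1..n} \<Longrightarrow> card (hk_nbrs n Bs eps x k) > 0"
  using nbrs_fin nbrs_self card_gt_0_iff by blast

lemma avg_le:
  assumes k: "k \<in> {1..n}" and h: "\<And>j. j \<in> hk_nbrs n Bs eps x k \<Longrightarrow> x j \<le> v"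
  shows "avg x k \<le> v"
proof -
  have "(\<Sum>j\<in>hk_nbrs n Bs eps x k. x j) \<le> real (card (hk_nbrs n Bs eps x k)) * v"
    using sum_bounded_above[of "hk_nbrs n Bs eps x k" x v] h by simp
  then show ?thesis using card_pos[OF k, of x] by (simp add: avg_def pos_divide_le_eq mult.commute)
qed

lemma avg_ge:
  assumes k: "k \<in> {1..n}" and h: "\<And>j. j \<in> hk_nbrs n Bs eps x k \<Longrightarrow> v \<le> x j"
  shows "v \<le> avg x k"
proof -
  have "real (card (hk_nbrs n Bs eps x k)) * v \<le> (\<Sum>j\<in>hk_nbrs n Bs eps x k. x j)"
    using sum_bounded_below[of "hk_nbrs n Bs eps x k" v x] h by simp
  then show ?thesis using card_pos[OF k, of x] by (simp add: avg_def pos_le_divide_eq mult.commute)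
qed

lemma avg_dev:
  assumes k: "k \<in> {1..n}" and hB: "\<And>j. j \<in> Bs \<Longrightarrow> x j = b1"
    and near: "\<bar>x k - b1\<bar> \<le> eps"
    and f: "\<And>j. j \<in> {1..n} \<Longrightarrow> s * (x j - b1) \<le> u" and u0: "0 \<le> u" and s: "s = 1 \<or> s = -1"
  shows "s * (avg x k - b1) \<le> real n / (real n + 1) * u"
proof -
  let ?N = "hk_nbrs n Bs eps x k"
  let ?A = "?N \<inter> {1..n}"
  have BN: "Bs \<subseteq> ?N" using hB near by (auto simp: hk_nbrs_def abs_minus_commute)
  have Neq: "?N = ?A \<union> Bs" using BN nbrs_sub by blast
  have dj: "?A \<inter> Bs = {}" using disj by blast
  have finA: "finite ?A" by simp
  have cN: "card ?N = card ?A + card Bs" using Neq dj card_Un_disjoint finA finB by metis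
  have cA: "card ?A \<le> n" using card_mono[of "{1..n}" ?A] by auto
  have mB: "card Bs \<ge> 1" using finB neB by (simp add: Suc_leI card_gt_0_iff)
  have cpos: "real (card ?N) > 0" using card_pos[OF k] by simp
  have eq: "s * (avg x k - b1) = (\<Sum>j\<in>?N. s * (x j - b1)) / real (card ?N)"
  proof -
    have e: "(\<Sum>j\<in>?N. s * (x j - b1)) = s * ((\<Sum>j\<in>?N. x j) - real (card ?N) * b1)"
      by (simp add: sum_subtractf right_diff_distrib sum_distrib_left)
    show ?thesis unfolding e avg_def using cpos by (simp add: field_simps)
  qed
  have "(\<Sum>j\<in>?N. s * (x j - b1)) = (\<Sum>j\<in>?A \<union> Bs. s * (x j - b1))"
    by (rule arg_cong[OF Neq])
  also have "\<dots> = (\<Sum>j\<in>?A. s * (x j - b1)) + (\<Sum>j\<in>Bs. s * (x j - b1))"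
    by (rule sum.union_disjoint[OF finA finB dj])
  also have "(\<Sum>j\<in>Bs. s * (x j - b1)) = 0" using hB by simp
  also have "(\<Sum>j\<in>?A. s * (x j - b1)) \<le> real (card ?A) * u"
    using sum_bounded_above[of ?A "\<lambda>j. s * (x j - b1)" u] f by simp
  finally have num: "(\<Sum>j\<in>?N. s * (x j - b1)) \<le> real (card ?A) * u" by simp
  define a where "a = real (card ?A)"
  define m where "m = real (card Bs)"
  have cN': "real (card ?N) = a + m" unfolding a_def m_def using cN by (metis of_nat_add)
  have a: "a \<le> real n" using cA unfolding a_def by simp
  have a0: "0 \<le> a" unfolding a_def by simp
  have m: "m \<ge> 1" using mB unfolding m_def by simp
  have num': "(\<Sum>j\<in>?N. s * (x j - b1)) \<le> a * u" using num unfolding a_def .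
  have "s * (avg x k - b1) \<le> a * u / (a + m)"
    unfolding eq cN'[symmetric] using divide_right_mono[OF num', of "real (card ?N)"] cpos by linarith
  also have "\<dots> = a / (a + m) * u" by simp
  also have "\<dots> \<le> real n / (real n + 1) * u"
  proof (rule mult_right_mono[OF _ u0])
    have "real n \<le> real n * m" using m by (simp add: mult_le_cancel_left1)
    then have "a \<le> real n * m" using a by linarith
    then have "a * (real n + 1) \<le> real n * (a + m)" by (simp add: algebra_simps)
    then show "a / (a + m) \<le> real n / (real n + 1)"
      using m a0 by (simp add: divide_simps)
  qed
  finally show ?thesis .
qed

lemma nbrs_full:
  assumes k: "k \<in> {1..n}" and hB: "\<And>j. j \<in> Bs \<Longrightarrow> x j = b1"
    and g: "\<And>j. j \<in> {1..n} \<Longrightarrow> \<bar>x j - b1\<bar> \<le> eps / 2"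
  shows "hk_nbrs n Bs eps x k = {1..n} \<union> Bs"
proof -
  have "\<And>j. j \<in> {1..n} \<union> Bs \<Longrightarrow> \<bar>x j - x k\<bar> \<le> eps"
  proof -
    fix j assume j: "j \<in> {1..n} \<union> Bs"
    have "\<bar>x j - b1\<bar> \<le> eps / 2" using j g hB eps0 by auto
    moreover have "\<bar>x k - b1\<bar> \<le> eps / 2" using g k by auto
    ultimately show "\<bar>x j - x k\<bar> \<le> eps" by linarith
  qed
  then show ?thesis by (auto simp: hk_nbrs_def)
qed


lemma clip_dev: assumes "s = 1 \<or> s = -1" shows "s * (clip01 z - b1) \<le> max (s * (z - b1)) 0"
  using assms b0 b1' by (auto simp: clip01_def)

end

locale hkt = hk +
  fixes x0 :: "nat \<Rightarrow> real" and xi :: "nat \<Rightarrow> nat \<Rightarrow> real"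
  assumes x0r: "\<forall>i\<in>{1..n}. 0 \<le> x0 i \<and> x0 i \<le> 1"
begin

abbreviation X where "X t \<equiv> hk_traj n Bs b1 eps x0 xi t"

lemma traj_B: "k \<in> Bs \<Longrightarrow> X t k = b1"
  by (cases t) (simp_all add: Let_def)

lemma traj_step: "k \<in> {1..n} \<Longrightarrow> X (Suc t) k = clip01 (avg (X t) k + xi k (Suc t))"
  using disj by (auto simp: Let_def avg_def)

declare hk_traj.simps(2)[simp del]

lemma traj_range: assumes "k \<in> {1..n}" shows "0 \<le> X t k \<and> X t k \<le> 1"
proof (cases t)
  case 0 then show ?thesis using x0r disj \<open>k \<in> {1..n}\<close> by auto
next
  case (Suc t') then show ?thesis using traj_step[of k t'] \<open>k \<in> {1..n}\<close> clip01_range by simp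
qed

lemma nbr_vals: "j \<in> hk_nbrs n Bs eps (X t) k \<Longrightarrow> (j \<in> {1..n} \<and> \<bar>X t j - X t k\<bar> \<le> eps) \<or> (j \<in> Bs \<and> X t j = b1 \<and> \<bar>X t j - X t k\<bar> \<le> eps)"
  using traj_B by (auto simp: hk_nbrs_def)

lemma dev_step:
  assumes s: "s = 1 \<or> s = -1" and h: "\<forall>j\<in>{1..n}. s * (X t j - b1) \<le> u"
    and u0: "0 \<le> u" and ue: "u \<le> eps" and nz: "\<forall>k\<in>{1..n}. \<bar>xi k (Suc t)\<bar> \<le> delta"
    and k: "k \<in> {1..n}"
  shows "s * (X (Suc t) k - b1) \<le> real n / (real n + 1) * u + delta"
proof -
  let ?A = "avg (X t) k"
  have d0: "0 \<le> delta" using nz k by force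
  have r0: "0 \<le> real n / (real n + 1) * u" using u0 by simp
  have sx: "s * xi k (Suc t) \<le> delta" using nz k s by force
  have "s * (?A - b1) \<le> real n / (real n + 1) * u \<or> s * (?A - b1) \<le> 0"
  proof (cases "\<bar>X t k - b1\<bar> \<le> eps")
    case True
    have "s * (?A - b1) \<le> real n / (real n + 1) * u"
      by (rule avg_dev[where x="X t" and s=s and u=u]) (use k True traj_B h u0 s in auto)
    then show ?thesis ..
  next
    case False
    with h k ue have far: "s * (X t k - b1) < - eps" using s by force
    have "s * (?A - X t k) \<le> eps"
    proof (cases "s = 1")
      case True
      have "?A \<le> X t k + eps" by (rule avg_le[OF k]) (use nbr_vals in force)
      then show ?thesis using True by simp
    next
      case False
      have "X t k - eps \<le> ?A" by (rule avg_ge[OF k]) (use nbr_vals in force)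
      then show ?thesis using False s by simp
    qed
    then show ?thesis using far by (simp add: algebra_simps)
  qed
  then have "s * (?A + xi k (Suc t) - b1) \<le> real n / (real n + 1) * u + delta"
    using sx r0 by (auto simp: algebra_simps)
  then show ?thesis using traj_step[OF k, of t] clip_dev[OF s, of "?A + xi k (Suc t)"] r0 d0
    by (simp add: max_def split: if_splits)
qed

lemma down_step:
  assumes h: "\<forall>j\<in>{1..n}. X t j \<le> v" and bv: "b1 \<le> v"
    and nz: "\<forall>k\<in>{1..n}. xi k (Suc t) \<le> -c" and k: "k \<in> {1..n}"
  shows "X (Suc t) k \<le> max (v - c) b1"
proof -
  have "avg (X t) k \<le> v" by (rule avg_le[OF k]) (use nbr_vals h bv in force)
  then show ?thesis using traj_step[OF k, of t] clip01_le[of "avg (X t) k + xi k (Suc t)"] nz k b0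
    by force
qed

lemma up_step:
  assumes h: "\<forall>j\<in>{1..n}. l \<le> X t j" and bv: "l \<le> b1"
    and nz: "\<forall>k\<in>{1..n}. c \<le> xi k (Suc t)" and k: "k \<in> {1..n}"
  shows "min (l + c) b1 \<le> X (Suc t) k"
proof -
  have "l \<le> avg (X t) k" by (rule avg_ge[OF k]) (use nbr_vals h bv in force)
  then show ?thesis using traj_step[OF k, of t] clip01_ge[of "avg (X t) k + xi k (Suc t)"] nz k b1'
    by force
qed

lemma pair_step:
  assumes g: "\<forall>j\<in>{1..n}. \<bar>X t j - b1\<bar> \<le> eps / 2" and nz: "\<forall>k\<in>{1..n}. \<bar>xi k (Suc t)\<bar> \<le> delta"
    and i: "i \<in> {1..n}" and j: "j \<in> {1..n}"
  shows "\<bar>X (Suc t) i - X (Suc t) j\<bar> \<le> 2 * delta"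
proof -
  have "avg (X t) i = avg (X t) j"
    unfolding avg_def using nbrs_full[OF i, of "X t"] nbrs_full[OF j, of "X t"] g traj_B by simp
  then have e1: "\<bar>X (Suc t) i - X (Suc t) j\<bar> \<le> \<bar>xi i (Suc t) - xi j (Suc t)\<bar>"
    using clip01_lip[of "avg (X t) i + xi i (Suc t)" "avg (X t) j + xi j (Suc t)"]
    by (simp only: traj_step[OF i] traj_step[OF j])
  have "\<bar>xi i (Suc t) - xi j (Suc t)\<bar> \<le> 2 * delta"
    using nz[rule_format, OF i] nz[rule_format, OF j] by (simp add: abs_le_iff)
  with e1 show ?thesis by linarith
qed


lemma r_bound: assumes dl: "delta \<le> eps / (2 * (real n + 1))"
  shows "real n / (real n + 1) * (eps / 2) + delta \<le> eps / 2"
proof -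
  have "real n / (real n + 1) * (eps / 2) = eps / 2 - eps / (2 * (real n + 1))"
    by (simp add: field_simps)
  then show ?thesis using dl by linarith
qed

lemma reach:
  assumes c0: "0 < c" and Kc: "1 \<le> real K * c" and dl: "delta \<le> eps / (2 * (real n + 1))"
    and nz: "\<forall>k\<in>{1..n}. \<forall>t\<ge>1. \<bar>xi k t\<bar> \<le> delta"
    and neg: "\<forall>k\<in>{1..n}. \<forall>t\<in>{s+1..s+K}. xi k t \<le> -c"
    and pos: "\<forall>k\<in>{1..n}. \<forall>t\<in>{s+K+1..s+2*K}. c \<le> xi k t"
  shows "\<forall>j\<in>{1..n}. \<bar>X (s+2*K) j - b1\<bar> \<le> eps / 2"
proof -
  have P1: "\<forall>j\<in>{1..n}. X (s+t) j \<le> max (1 - real t * c) b1" if "t \<le> K" for t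
    using that
  proof (induction t)
    case 0 then show ?case using traj_range by (force simp: le_max_iff_disj)
  next
    case (Suc t)
    have nzt: "\<forall>k\<in>{1..n}. xi k (Suc (s+t)) \<le> -c" using neg Suc.prems by auto
    have "\<forall>j\<in>{1..n}. X (Suc (s+t)) j \<le> max (max (1 - real t * c) b1 - c) b1"
      using down_step[OF _ _ nzt] Suc by auto
    moreover have "max (max (1 - real t * c) b1 - c) b1 = max (1 - real (Suc t) * c) b1"
      using c0 by (auto simp: max_def algebra_simps)
    ultimately show ?case by simp
  qed
  have hK: "\<forall>j\<in>{1..n}. X (s+K) j \<le> b1" using P1[of K] Kc b0 by (auto simp: max_def)
  have rb: "real n / (real n + 1) * (eps / 2) + delta \<le> eps / 2" by (rule r_bound[OF dl])
  have P2: "\<forall>j\<in>{1..n}. X (s+K+t) j - b1 \<le> eps / 2 \<and> min (real t * c) b1 \<le> X (s+K+t) j"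
    if "t \<le> K" for t
    using that
  proof (induction t)
    case 0 then show ?case using traj_range hK eps0 by (force simp: min_le_iff_disj)
  next
    case (Suc t)
    have nzt: "\<forall>k\<in>{1..n}. c \<le> xi k (Suc (s+K+t))" using pos Suc.prems by auto
    have nzb: "\<forall>k\<in>{1..n}. \<bar>xi k (Suc (s+K+t))\<bar> \<le> delta" using nz by auto
    have IH: "\<forall>j\<in>{1..n}. X (s+K+t) j - b1 \<le> eps / 2" "\<forall>j\<in>{1..n}. min (real t * c) b1 \<le> X (s+K+t) j"
      using Suc by auto
    have "\<forall>j\<in>{1..n}. 1 * (X (Suc (s+K+t)) j - b1) \<le> real n / (real n + 1) * (eps / 2) + delta"
      using dev_step[of 1 "s+K+t" "eps/2"] IH(1) nzb eps0 by auto
    moreover have "\<forall>j\<in>{1..n}. min (min (real t * c) b1 + c) b1 \<le> X (Suc (s+K+t)) j"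
      using up_step[OF IH(2) _ nzt] by auto
    moreover have "min (min (real t * c) b1 + c) b1 = min (real (Suc t) * c) b1"
      using c0 by (auto simp: min_def algebra_simps)
    ultimately have A: "\<forall>j\<in>{1..n}. 1 * (X (Suc (s+K+t)) j - b1) \<le> real n / (real n + 1) * (eps / 2) + delta"
      and B: "\<forall>j\<in>{1..n}. min (real (Suc t) * c) b1 \<le> X (Suc (s+K+t)) j" by auto
    show ?case
    proof
      fix j assume j: "j \<in> {1..n}"
      have "1 * (X (Suc (s+K+t)) j - b1) \<le> real n / (real n + 1) * (eps / 2) + delta" using A j by blast
      then have "X (Suc (s+K+t)) j - b1 \<le> real n / (real n + 1) * (eps / 2) + delta" by (simp only: mult_1_left)
      then have "X (Suc (s+K+t)) j - b1 \<le> eps / 2" using rb by (rule order_trans)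
      then have "X (s+K+Suc t) j - b1 \<le> eps / 2" by simp
      moreover have "min (real (Suc t) * c) b1 \<le> X (s+K+Suc t) j" using B j by simp
      ultimately show "X (s+K+Suc t) j - b1 \<le> eps / 2 \<and> min (real (Suc t) * c) b1 \<le> X (s+K+Suc t) j" ..
    qed
  qed
  have "\<forall>j\<in>{1..n}. X (s+K+K) j - b1 \<le> eps / 2 \<and> b1 \<le> X (s+K+K) j"
  proof
    fix j assume j: "j \<in> {1..n}"
    have "min (real K * c) b1 = b1" using Kc b1' by simp
    then show "X (s+K+K) j - b1 \<le> eps / 2 \<and> b1 \<le> X (s+K+K) j" using P2[of K] j by auto
  qed
  then show ?thesis using eps0 by (auto simp: mult_2 add.assoc)
qed

definition w :: "real \<Rightarrow> nat \<Rightarrow> real" where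
  "w delta t = (real n + 1) * delta + (real n / (real n + 1)) ^ t * (eps / 2 - (real n + 1) * delta)"

lemma w_props:
  assumes dl: "delta \<le> eps / (2 * (real n + 1))" and d0: "0 \<le> delta"
  shows "w delta 0 = eps / 2" "w delta (Suc t) = real n / (real n + 1) * w delta t + delta"
    "0 \<le> w delta t" "w delta t \<le> eps / 2"
proof -
  have C: "0 \<le> eps / 2 - (real n + 1) * delta" using dl by (simp add: field_simps)
  have r0: "0 \<le> real n / (real n + 1)" "real n / (real n + 1) \<le> 1" by auto
  have p1: "(real n / (real n + 1)) ^ t \<le> 1" using r0 by (simp add: power_le_one)
  have p0: "0 \<le> (real n / (real n + 1)) ^ t" using r0 by simp
  show "w delta 0 = eps / 2" by (simp add: w_def)
  show "w delta (Suc t) = real n / (real n + 1) * w delta t + delta"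
  proof -
    define r where "r = real n / (real n + 1)"
    define C where "C = eps / 2 - (real n + 1) * delta"
    have wd: "\<And>t. w delta t = (real n + 1) * delta + r ^ t * C" unfolding w_def r_def C_def by simp
    have hr2: "r * ((real n + 1) * delta) = real n * delta" unfolding r_def by (simp add: field_simps)
    have "r * w delta t + delta = r * ((real n + 1) * delta) + r * (r ^ t * C) + delta"
      unfolding wd by (simp add: distrib_left)
    also have "\<dots> = (real n + 1) * delta + r ^ Suc t * C" unfolding hr2 by (simp add: algebra_simps)
    finally show ?thesis unfolding wd r_def by simp
  qed
  show "0 \<le> w delta t" unfolding w_def using C p0 d0 by simp
  show "w delta t \<le> eps / 2" unfolding w_def
    using mult_left_le_one_le[OF C p0 p1] by (simp add: algebra_simps)
qed

lemma stay:
  assumes g: "\<forall>j\<in>{1..n}. \<bar>X T j - b1\<bar> \<le> eps / 2"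
    and dl: "delta \<le> eps / (2 * (real n + 1))" and d0: "0 \<le> delta"
    and nz: "\<forall>k\<in>{1..n}. \<forall>t\<ge>1. \<bar>xi k t\<bar> \<le> delta"
  shows "\<forall>j\<in>{1..n}. \<bar>X (T+t) j - b1\<bar> \<le> w delta t"
proof (induction t)
  case 0
  have e: "w delta 0 = eps / 2" using w_props(1)[OF dl d0] .
  show ?case using g by (simp only: add_0_right e)
next
  case (Suc t)
  have nzb: "\<forall>k\<in>{1..n}. \<bar>xi k (Suc (T+t))\<bar> \<le> delta" using nz by auto
  have wle: "w delta t \<le> eps" using w_props(4)[OF dl d0, of t] eps0 by linarith
  have w0: "0 \<le> w delta t" using w_props(3)[OF dl d0] .
  have a: "\<forall>j\<in>{1..n}. 1 * (X (Suc (T+t)) j - b1) \<le> real n / (real n + 1) * w delta t + delta"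
    using dev_step[of 1 "T+t" "w delta t"] Suc nzb wle w0 by (auto simp: abs_le_iff)
  have b: "\<forall>j\<in>{1..n}. -1 * (X (Suc (T+t)) j - b1) \<le> real n / (real n + 1) * w delta t + delta"
    using dev_step[of "-1" "T+t" "w delta t"] Suc nzb wle w0 by (auto simp: abs_le_iff)
  show ?case using a b w_props(2)[OF dl d0, of t] by (auto simp: abs_le_iff)
qed


lemma fin_pairs: "finite {f i j | i j. i \<in> {1..n} \<and> j \<in> {1..n}}"
  by (rule finite_image_set2) auto
lemma ne_pairs: "{f i j | i j. i \<in> {1..n} \<and> j \<in> {1..n}} \<noteq> {}"
  using n1 by auto
lemma fin_single: "finite {f i | i. i \<in> {1..n}}" by auto
lemma ne_single: "{f i | i. i \<in> {1..n}} \<noteq> {}" using n1 by auto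

lemma w_lim: "(\<lambda>t. w delta (t - T)) \<longlonglongrightarrow> (real n + 1) * delta"
proof (rule LIMSEQ_offset[where k=T])
  have "norm (real n / (real n + 1)) < 1" by simp
  then have "(\<lambda>t. (real n / (real n + 1)) ^ t) \<longlonglongrightarrow> 0" by (rule LIMSEQ_power_zero)
  then have "(\<lambda>t. w delta t) \<longlonglongrightarrow> (real n + 1) * delta + 0 * (eps / 2 - (real n + 1) * delta)"
    unfolding w_def by (rule tendsto_add[OF tendsto_const tendsto_mult[OF _ tendsto_const]])
  then show "(\<lambda>t. w delta (t + T - T)) \<longlonglongrightarrow> (real n + 1) * delta" by simp
qed

lemma final:
  assumes g: "\<forall>j\<in>{1..n}. \<bar>X T j - b1\<bar> \<le> eps / 2"
    and dl: "delta \<le> eps / (2 * (real n + 1))" and d0: "0 \<le> delta"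
    and nz: "\<forall>k\<in>{1..n}. \<forall>t\<ge>1. \<bar>xi k t\<bar> \<le> delta"
  shows "limsup (\<lambda>t. ereal (Max {\<bar>X t i - X t j\<bar> | i j. i \<in> {1..n} \<and> j \<in> {1..n}})) \<le> ereal (2 * delta)
    \<and> limsup (\<lambda>t. ereal (Max {\<bar>X t i - b1\<bar> | i. i \<in> {1..n}})) \<le> ereal ((real n + 1) * delta)"
proof
  have st: "\<And>m. \<forall>j\<in>{1..n}. \<bar>X (T+m) j - b1\<bar> \<le> w delta m" using stay[OF g dl d0 nz] by blast
  have gd: "\<And>m. \<forall>j\<in>{1..n}. \<bar>X (T+m) j - b1\<bar> \<le> eps / 2"
    using st w_props(4)[OF dl d0] by (meson order_trans)
  have "eventually (\<lambda>t. ereal (Max {\<bar>X t i - X t j\<bar> | i j. i \<in> {1..n} \<and> j \<in> {1..n}}) \<le> ereal (2 * delta)) sequentially"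
    unfolding eventually_sequentially
  proof (intro exI allI impI)
    fix t assume t: "Suc T \<le> t"
    then have te: "t = Suc (T + (t - Suc T))" by simp
    have "\<forall>k\<in>{1..n}. \<bar>xi k (Suc (T + (t - Suc T)))\<bar> \<le> delta" using nz by auto
    then have "\<And>i j. i \<in> {1..n} \<Longrightarrow> j \<in> {1..n} \<Longrightarrow> \<bar>X t i - X t j\<bar> \<le> 2 * delta"
      using pair_step[OF gd] te by metis
    then have "Max {\<bar>X t i - X t j\<bar> | i j. i \<in> {1..n} \<and> j \<in> {1..n}} \<le> 2 * delta"
      by (intro Max.boundedI fin_pairs ne_pairs) auto
    then show "ereal (Max {\<bar>X t i - X t j\<bar> | i j. i \<in> {1..n} \<and> j \<in> {1..n}}) \<le> ereal (2 * delta)" by simp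
  qed
  then show "limsup (\<lambda>t. ereal (Max {\<bar>X t i - X t j\<bar> | i j. i \<in> {1..n} \<and> j \<in> {1..n}})) \<le> ereal (2 * delta)"
    by (rule Limsup_bounded)
next
  have st: "\<And>m. \<forall>j\<in>{1..n}. \<bar>X (T+m) j - b1\<bar> \<le> w delta m" using stay[OF g dl d0 nz] by blast
  have ev: "eventually (\<lambda>t. ereal (Max {\<bar>X t i - b1\<bar> | i. i \<in> {1..n}}) \<le> ereal (w delta (t - T))) sequentially"
    unfolding eventually_sequentially
  proof (intro exI allI impI)
    fix t assume t: "T \<le> t"
    then have te: "t = T + (t - T)" by simp
    have "\<And>i. i \<in> {1..n} \<Longrightarrow> \<bar>X t i - b1\<bar> \<le> w delta (t - T)" using st te by metis
    then have "Max {\<bar>X t i - b1\<bar> | i. i \<in> {1..n}} \<le> w delta (t - T)"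
      by (intro Max.boundedI fin_single ne_single) auto
    then show "ereal (Max {\<bar>X t i - b1\<bar> | i. i \<in> {1..n}}) \<le> ereal (w delta (t - T))" by simp
  qed
  have "limsup (\<lambda>t. ereal (w delta (t - T))) = ereal ((real n + 1) * delta)"
    by (intro lim_imp_Limsup tendsto_ereal w_lim) simp
  then show "limsup (\<lambda>t. ereal (Max {\<bar>X t i - b1\<bar> | i. i \<in> {1..n}})) \<le> ereal ((real n + 1) * delta)"
    using Limsup_mono[OF ev] by simp
qed

end


lemma pos_part:
  fixes f :: "'a \<Rightarrow> real"
  assumes ps: "prob_space M" and fm: "f \<in> borel_measurable M" and bd: "AE \<omega> in M. \<bar>f \<omega>\<bar> \<le> d"
    and i0: "integral\<^sup>L M f = 0" and i2: "integral\<^sup>L M (\<lambda>\<omega>. (f \<omega>)\<^sup>2) > 0"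
  shows "\<exists>c>0. measure M {\<omega>\<in>space M. c \<le> f \<omega>} > 0"
proof (rule ccontr)
  interpret prob_space M by (rule ps)
  assume nt: "\<not> (\<exists>c>0. measure M {\<omega>\<in>space M. c \<le> f \<omega>} > 0)"
  have z: "measure M {\<omega>\<in>space M. 1 / real (Suc k) \<le> f \<omega>} = 0" for k
  proof -
    have "1 / real (Suc k) > 0" by simp
    then have "\<not> measure M {\<omega>\<in>space M. 1 / real (Suc k) \<le> f \<omega>} > 0" using nt by blast
    then show ?thesis using measure_nonneg[of M "{\<omega>\<in>space M. 1 / real (Suc k) \<le> f \<omega>}"] by linarith
  qed
  have "AE \<omega> in M. \<not> (1 / real (Suc k) \<le> f \<omega>)" for k
    using z[of k] by (subst (asm) prob_Collect_eq_0) (use fm in measurable)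
  then have "AE \<omega> in M. \<forall>k. \<not> (1 / real (Suc k) \<le> f \<omega>)" by (simp add: AE_all_countable)
  then have le: "AE \<omega> in M. f \<omega> \<le> 0"
  proof (rule AE_mp, intro AE_I2 impI)
    fix \<omega> assume h: "\<forall>k. \<not> (1 / real (Suc k) \<le> f \<omega>)"
    show "f \<omega> \<le> 0"
    proof (rule ccontr)
      assume "\<not> f \<omega> \<le> 0"
      then obtain k where "inverse (real (Suc k)) < f \<omega>" using reals_Archimedean[of "f \<omega>"] by force
      then show False using h[rule_format, of k] by (simp add: inverse_eq_divide)
    qed
  qed
  have int: "integrable M f" by (rule integrable_const_bound[where B=d]) (use bd fm in auto)
  have "integral\<^sup>L M (\<lambda>\<omega>. - f \<omega>) = 0 \<longleftrightarrow> (AE \<omega> in M. - f \<omega> = 0)"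
    by (rule integral_nonneg_eq_0_iff_AE) (use int le in auto)
  then have "AE \<omega> in M. - f \<omega> = 0" using i0 by simp
  then have "AE \<omega> in M. (f \<omega>)\<^sup>2 = 0" by (rule AE_mp) (auto intro!: AE_I2)
  then have "integral\<^sup>L M (\<lambda>\<omega>. (f \<omega>)\<^sup>2) = integral\<^sup>L M (\<lambda>\<omega>. 0)"
    by (rule integral_cong_AE[rotated 2]) (use fm in measurable)
  then show False using i2 by simp
qed



lemma mod_block: assumes "L * m + 1 \<le> (t::nat)" "t \<le> L * m + L" shows "(t - 1) mod L = t - 1 - L * m"
proof -
  have r: "t - 1 - L * m < L" using assms by linarith
  have "t - 1 = L * m + (t - 1 - L * m)" using assms by linarith
  then have "(t - 1) mod L = (L * m + (t - 1 - L * m)) mod L" by simp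
  also have "\<dots> = t - 1 - L * m" using r by simp
  finally show ?thesis .
qed

lemma div_block: assumes "L * m + 1 \<le> (t::nat)" "t \<le> L * m + L" shows "(t - 1) div L = m"
  by (rule div_nat_eqI) (use assms in auto)

theorem theorem1:
  fixes M :: "'a measure" and n :: nat and Bs :: "nat set" and b1 eps delta :: real
    and x0 :: "nat \<Rightarrow> real" and \<xi> :: "nat \<Rightarrow> nat \<Rightarrow> 'a \<Rightarrow> real"
  assumes "prob_space M"
    and "n \<ge> 1"
    and "finite Bs" and "Bs \<noteq> {}" and "Bs \<inter> {1..n} = {}"
    and "0 \<le> b1" and "b1 \<le> 1"
    and "0 < eps" and "eps \<le> 1"
    and "\<forall>i\<in>{1..n}. 0 \<le> x0 i \<and> x0 i \<le> 1"
    and "0 < delta" and "delta < eps / (2 * (real n + 1))"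
    and "\<forall>i\<in>{1..n}. \<forall>t\<ge>1. \<xi> i t \<in> borel_measurable M"
    and "prob_space.indep_vars M (\<lambda>_. borel) (\<lambda>(i, t). \<xi> i t) ({1..n} \<times> {1..})"
    and "\<forall>i\<in>{1..n}. \<forall>t\<ge>1. distr M borel (\<xi> i t) = distr M borel (\<xi> 1 1)"
    and "integral\<^sup>L M (\<xi> 1 1) = 0"
    and "integral\<^sup>L M (\<lambda>\<omega>. (\<xi> 1 1 \<omega>)\<^sup>2) > 0"
    and "AE \<omega> in M. \<bar>\<xi> 1 1 \<omega>\<bar> \<le> delta"
  shows "AE \<omega> in M.
     limsup (\<lambda>t. ereal (Max {\<bar>hk_traj n Bs b1 eps x0 (\<lambda>i s. \<xi> i s \<omega>) t i
                              - hk_traj n Bs b1 eps x0 (\<lambda>i s. \<xi> i s \<omega>) t j\<bar> | i j. i \<in> {1..n} \<and> j \<in> {1..n}}))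
       \<le> ereal (2 * delta)
   \<and> limsup (\<lambda>t. ereal (Max {\<bar>hk_traj n Bs b1 eps x0 (\<lambda>i s. \<xi> i s \<omega>) t i - b1\<bar> | i. i \<in> {1..n}}))
       \<le> ereal ((real n + 1) * delta)"
proof -
  interpret P: prob_space M by (rule assms(1))
  interpret H: hk n Bs b1 eps by unfold_locales (use assms in auto)
  note ind = assms(14)
  have meas: "\<And>i t. i \<in> {1..n} \<Longrightarrow> 1 \<le> t \<Longrightarrow> \<xi> i t \<in> borel_measurable M" using assms(13) by auto
  have m11: "\<xi> 1 1 \<in> borel_measurable M" using meas assms(2) by auto
  have pe: "P.prob (\<xi> i t -` S \<inter> space M) = P.prob (\<xi> 1 1 -` S \<inter> space M)"
    if "i \<in> {1..n}" "1 \<le> t" "S \<in> sets borel" for i t S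
  proof -
    have "P.prob (\<xi> i t -` S \<inter> space M) = measure (distr M borel (\<xi> i t)) S"
      using measure_distr[OF meas[OF that(1,2)] that(3)] by simp
    also have "\<dots> = measure (distr M borel (\<xi> 1 1)) S"
    proof -
      have "distr M borel (\<xi> i t) = distr M borel (\<xi> 1 1)" using assms(15) that by blast
      then show ?thesis by (simp only:)
    qed
    also have "\<dots> = P.prob (\<xi> 1 1 -` S \<inter> space M)" using measure_distr[OF m11 that(3)] by simp
    finally show ?thesis .
  qed
  have ae1: "AE \<omega> in M. \<forall>i t. i \<in> {1..n} \<longrightarrow> 1 \<le> t \<longrightarrow> \<bar>\<xi> i t \<omega>\<bar> \<le> delta"
  proof -
    define B where "B = {x::real. delta < \<bar>x\<bar>}"
    have "open B" unfolding B_def by (intro open_Collect_less continuous_intros)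
    then have Bb: "B \<in> sets borel" by simp
    have ev: "\<xi> 1 1 -` B \<inter> space M \<in> P.events" by (rule measurable_sets[OF m11 Bb])
    have "AE \<omega> in M. \<omega> \<notin> \<xi> 1 1 -` B \<inter> space M"
      using assms(18) by (rule AE_mp) (auto simp: B_def intro!: AE_I2)
    then have "P.prob (\<xi> 1 1 -` B \<inter> space M) = 0" using P.prob_eq_0[OF ev] by simp
    have "AE \<omega> in M. \<bar>\<xi> i t \<omega>\<bar> \<le> delta" if "i \<in> {1..n}" "1 \<le> t" for i t
    proof -
      have "P.prob (\<xi> i t -` B \<inter> space M) = 0" using pe[OF that Bb] \<open>P.prob (\<xi> 1 1 -` B \<inter> space M) = 0\<close> by simp
      then have "AE \<omega> in M. \<omega> \<notin> \<xi> i t -` B \<inter> space M"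
        by (subst (asm) P.prob_eq_0) (use measurable_sets[OF meas[OF that] Bb] in auto)
      then show ?thesis by (rule AE_mp) (auto simp: B_def intro!: AE_I2)
    qed
    then show ?thesis by (auto simp: AE_all_countable)
  qed
  have ae_bd: "AE \<omega> in M. \<forall>k\<in>{1..n}. \<forall>t\<ge>1. \<bar>\<xi> k t \<omega>\<bar> \<le> delta"
    using ae1 by (rule AE_mp) (auto intro!: AE_I2)
  obtain c1 where c1: "c1 > 0" "P.prob {\<omega>\<in>space M. c1 \<le> \<xi> 1 1 \<omega>} > 0"
    using pos_part[OF assms(1) m11 assms(18,16,17)] by blast
  have mm: "(\<lambda>\<omega>. - \<xi> 1 1 \<omega>) \<in> borel_measurable M" using m11 by measurable
  obtain c2 where c2: "c2 > 0" "P.prob {\<omega>\<in>space M. c2 \<le> - \<xi> 1 1 \<omega>} > 0"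
    using pos_part[OF assms(1) mm, of delta] assms(18,16,17) by auto
  define c where "c = min c1 c2"
  have c0: "0 < c" using c1 c2 by (simp add: c_def)
  have qpos: "P.prob (\<xi> 1 1 -` {c..} \<inter> space M) > 0"
  proof -
    have "\<xi> 1 1 -` {c..} \<inter> space M \<in> P.events" by (rule measurable_sets[OF m11]) simp
    then have "P.prob {\<omega>\<in>space M. c1 \<le> \<xi> 1 1 \<omega>} \<le> P.prob (\<xi> 1 1 -` {c..} \<inter> space M)"
      by (rule P.finite_measure_mono[rotated]) (auto simp: c_def)
    then show ?thesis using c1 by linarith
  qed
  have qneg: "P.prob (\<xi> 1 1 -` {..-c} \<inter> space M) > 0"
  proof -
    have "\<xi> 1 1 -` {..-c} \<inter> space M \<in> P.events" by (rule measurable_sets[OF m11]) simp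
    then have "P.prob {\<omega>\<in>space M. c2 \<le> - \<xi> 1 1 \<omega>} \<le> P.prob (\<xi> 1 1 -` {..-c} \<inter> space M)"
      by (rule P.finite_measure_mono[rotated]) (auto simp: c_def)
    then show ?thesis using c2 by linarith
  qed
  define q where "q = min (P.prob (\<xi> 1 1 -` {..-c} \<inter> space M)) (P.prob (\<xi> 1 1 -` {c..} \<inter> space M))"
  have q0: "0 < q" using qpos qneg by (simp add: q_def)
  define K where "K = nat \<lceil>1 / c\<rceil>"
  have Kc: "1 \<le> real K * c"
  proof -
    have "1 / c \<le> real K" unfolding K_def by linarith
    then show ?thesis using c0 by (simp add: field_simps)
  qed
  have K1: "K \<ge> 1" using Kc by (cases K) auto
  define L where "L = 2 * K"
  have L1: "L \<ge> 1" using K1 by (simp add: L_def)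
  define S where "S t = (if (t - 1) mod L < K then {..-c} else ({c..} :: real set))" for t :: nat
  have SB: "S t \<in> sets borel" for t by (simp add: S_def)
  define I where "I j = {1..n} \<times> {L*j+1..L*j+L}" for j :: nat
  define F where "F p = (\<lambda>(i, t). \<xi> i t) p -` S (snd p) \<inter> space M" for p :: "nat \<times> nat"
  define E where "E j = (\<Inter>p\<in>I j. F p)" for j
  have Isub: "I j \<subseteq> {1..n} \<times> {1..}" for j by (auto simp: I_def)
  have Ifin: "finite (I j)" for j by (simp add: I_def)
  have Ine: "I j \<noteq> {}" for j using assms(2) L1 by (auto simp: I_def)
  have cardI: "card (I j) = n * L" for j by (simp add: I_def card_cartesian_product)
  have Idisj: "I j \<inter> I j' = {}" if "j \<noteq> j'" for j j'
  proof (rule ccontr)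
    assume "I j \<inter> I j' \<noteq> {}"
    then obtain i t where "(i, t) \<in> I j" "(i, t) \<in> I j'" by auto
    then have "L * j + 1 \<le> t" "t \<le> L * j + L" "L * j' + 1 \<le> t" "t \<le> L * j' + L" by (auto simp: I_def)
    then have "(t - 1) div L = j" "(t - 1) div L = j'" using div_block by blast+
    then show False using that by simp
  qed
  have Fev: "F p \<in> P.events" if "p \<in> I j" for p j
  proof -
    obtain i t where p: "p = (i, t)" by (cases p)
    have "i \<in> {1..n}" "1 \<le> t" using that p by (auto simp: I_def)
    then show ?thesis unfolding F_def p using measurable_sets[OF meas SB] by simp
  qed
  have Eev: "E j \<in> P.events" for j unfolding E_def
    by (rule sets.finite_INT[OF Ifin Ine Fev])
  have probF: "P.prob (\<Inter>p\<in>J. F p) = (\<Prod>p\<in>J. P.prob (F p))"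
    if "J \<noteq> {}" "finite J" "J \<subseteq> {1..n} \<times> {1..}" for J
    unfolding F_def by (rule P.indep_varsD[OF ind that]) (simp add: SB)
  have Fq: "q \<le> P.prob (F p)" if "p \<in> I j" for p j
  proof -
    obtain i t where p: "p = (i, t)" by (cases p)
    have it: "i \<in> {1..n}" "1 \<le> t" using that p by (auto simp: I_def)
    have "P.prob (F p) = P.prob (\<xi> 1 1 -` S t \<inter> space M)"
      unfolding F_def p using pe[OF it SB] by simp
    then show ?thesis unfolding q_def S_def by auto
  qed
  have Ebd: "q ^ (n * L) \<le> P.prob (E j)" for j
  proof -
    have "q ^ (n * L) = (\<Prod>p\<in>I j. q)" using cardI by simp
    also have "\<dots> \<le> (\<Prod>p\<in>I j. P.prob (F p))" by (rule prod_mono) (use Fq q0 in auto)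
    also have "\<dots> = P.prob (E j)" unfolding E_def using probF[OF Ine Ifin Isub] by simp
    finally show ?thesis .
  qed
  have indep: "P.indep_events E UNIV"
  proof (rule P.indep_eventsI)
    show "E i \<in> P.events" for i by (rule Eev)
    fix J :: "nat set" assume J: "J \<subseteq> UNIV" "finite J" "J \<noteq> {}"
    have e: "(\<Inter>j\<in>J. E j) = (\<Inter>p\<in>\<Union>(I ` J). F p)" unfolding E_def by blast
    have "P.prob (\<Inter>p\<in>\<Union>(I ` J). F p) = (\<Prod>p\<in>\<Union>(I ` J). P.prob (F p))"
      by (rule probF) (use J Ine Ifin Isub in auto)
    also have "\<dots> = (\<Prod>j\<in>J. \<Prod>p\<in>I j. P.prob (F p))"
      by (rule prod.UNION_disjoint) (use J Ifin Idisj in auto)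
    also have "\<dots> = (\<Prod>j\<in>J. P.prob (E j))"
      unfolding E_def using probF[OF Ine Ifin Isub] by simp
    finally show "P.prob (\<Inter>j\<in>J. E j) = (\<Prod>j\<in>J. P.prob (E j))" using e by simp
  qed
  define U where "U N = (\<Union>m\<in>{N..}. E m)" for N
  have Uev: "range U \<subseteq> P.events" unfolding U_def using Eev by auto
  have Udec: "decseq U" unfolding U_def decseq_def by (auto intro: order_trans)
  have "P.prob (\<Inter>N. U N) \<noteq> 0"
  proof
    assume z: "P.prob (\<Inter>N. U N) = 0"
    have lim: "(\<lambda>N. P.prob (U N)) \<longlonglongrightarrow> P.prob (\<Inter>N. U N)"
      by (rule P.finite_Lim_measure_decseq[OF Uev Udec])
    have "q ^ (n * L) \<le> P.prob (U N)" for N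
    proof -
      have "P.prob (E N) \<le> P.prob (U N)"
        by (rule P.finite_measure_mono) (use Uev in \<open>auto simp: U_def\<close>)
      then show ?thesis using Ebd[of N] by linarith
    qed
    then have "q ^ (n * L) \<le> P.prob (\<Inter>N. U N)" by (intro LIMSEQ_le_const[OF lim]) auto
    moreover have "0 < q ^ (n * L)" using q0 by simp
    ultimately show False using z by simp
  qed
  then have "P.prob (\<Inter>N. U N) = 1" using P.borel_0_1_law[OF indep] unfolding U_def by auto
  then have aeE: "AE \<omega> in M. \<omega> \<in> (\<Inter>N. U N)"
    by (subst (asm) P.prob_eq_1) (use Uev in auto)
  show ?thesis
    using aeE ae_bd
  proof (eventually_elim)
    case (elim \<omega>)
    obtain m where m: "\<omega> \<in> E m" using elim(1) unfolding U_def by auto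
    have mem: "\<xi> i t \<omega> \<in> S t" if "(i, t) \<in> I m" for i t
    proof -
      have "\<omega> \<in> F (i, t)" using m that unfolding E_def by blast
      then show ?thesis by (simp add: F_def)
    qed
    have neg: "\<forall>k\<in>{1..n}. \<forall>t\<in>{L*m+1..L*m+K}. \<xi> k t \<omega> \<le> -c"
    proof (intro ballI)
      fix k t assume k: "k \<in> {1..n}" and t: "t \<in> {L*m+1..L*m+K}"
      have "(k, t) \<in> I m" using k t by (auto simp: I_def L_def)
      moreover have "(t - 1) mod L < K" using t mod_block[of L m t] by (auto simp: L_def)
      ultimately show "\<xi> k t \<omega> \<le> -c" using mem[of k t] by (simp add: S_def)
    qed
    have pos: "\<forall>k\<in>{1..n}. \<forall>t\<in>{L*m+K+1..L*m+2*K}. c \<le> \<xi> k t \<omega>"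
    proof (intro ballI)
      fix k t assume k: "k \<in> {1..n}" and t: "t \<in> {L*m+K+1..L*m+2*K}"
      have "(k, t) \<in> I m" using k t by (auto simp: I_def L_def)
      moreover have "\<not> (t - 1) mod L < K" using t mod_block[of L m t] by (auto simp: L_def)
      ultimately show "c \<le> \<xi> k t \<omega>" using mem[of k t] by (simp add: S_def)
    qed
    interpret T: hkt n Bs b1 eps x0 "\<lambda>i s. \<xi> i s \<omega>" by unfold_locales (rule assms(10))
    have dl: "delta \<le> eps / (2 * (real n + 1))" using assms(12) by simp
    have g: "\<forall>j\<in>{1..n}. \<bar>hk_traj n Bs b1 eps x0 (\<lambda>i s. \<xi> i s \<omega>) (L*m + 2*K) j - b1\<bar> \<le> eps / 2"
      by (rule T.reach[OF c0 Kc dl elim(2) neg pos])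
    show ?case by (rule T.final[OF g dl _ elim(2)]) (use assms(11) in simp)
  qed
qed


end
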